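(* Every trigraph $G$ admits a partial contraction sequence of width at most $4\Delta(G)$ whose final quotient is an asymmetric trigraph $H$ with $\Delta(H)\leq\Delta(G)$.
   Context: A trigraph is a finite simple graph whose edges are each colored red or black; $\Delta$ denotes maximum degree (both colors). A trigraph is asymmetric if the automorphism group of its underlying simple graph is trivial. The red degree of a vertex is the number of red edges incident to it. For a partition $\mathcal{P}$ of $V(G)$, the quotient trigraph $G/\mathcal{P}$ has vertex set $\mathcal{P}$; two distinct parts $U,W$ are joined by a black edge if every pair $\{u,w\}$ with $u\in U,w\in W$ is a black edge of $G$, are non-adjacent if no such pair is an edge, and are joined by a red edge otherwise. A partial contraction sequence of an $n$-vertex trigraph $G$ is a sequence $\mathcal{P}_n,\dots,\mathcal{P}_i$ of partitions of $V(G)$ where $\mathcal{P}_n$ is the partition into singletons and each $\mathcal{P}_j$ arises from $\mathcal{P}_{j+1}$ by merging two parts; its width is the maximum red degree over all $G/\mathcal{P}_j$ in the sequence, and its final quotient is $G/\mathcal{P}_i$. *)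

theory Defs
  imports Main
begin

record 'a trigraph =
  verts :: "'a set"
  edges :: "'a set set"
  red   :: "'a set set"

definition is_trigraph :: "'a trigraph \<Rightarrow> bool" where
  "is_trigraph G \<longleftrightarrow> finite (verts G)
     \<and> edges G \<subseteq> {{u, v} | u v. u \<in> verts G \<and> v \<in> verts G \<and> u \<noteq> v}
     \<and> red G \<subseteq> edges G"

definition black :: "'a trigraph \<Rightarrow> 'a set set" where
  "black G = edges G - red G"

definition degree :: "'a trigraph \<Rightarrow> 'a \<Rightarrow> nat" where
  "degree G v = card {e \<in> edges G. v \<in> e}"

definition red_degree :: "'a trigraph \<Rightarrow> 'a \<Rightarrow> nat" where
  "red_degree G v = card {e \<in> red G. v \<in> e}"

definition max_degree :: "'a trigraph \<Rightarrow> nat" where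
  "max_degree G = Max (insert 0 (degree G ` verts G))"

definition max_red_degree :: "'a trigraph \<Rightarrow> nat" where
  "max_red_degree G = Max (insert 0 (red_degree G ` verts G))"

text \<open>Asymmetric: the underlying simple graph has only the trivial automorphism.\<close>
definition asymmetric :: "'a trigraph \<Rightarrow> bool" where
  "asymmetric G \<longleftrightarrow>
     (\<forall>f. bij_betw f (verts G) (verts G)
          \<and> (\<forall>u\<in>verts G. \<forall>v\<in>verts G. {u, v} \<in> edges G \<longleftrightarrow> {f u, f v} \<in> edges G)
        \<longrightarrow> (\<forall>v\<in>verts G. f v = v))"

definition quot_trigraph :: "'a trigraph \<Rightarrow> 'a set set \<Rightarrow> 'a set trigraph" where
  "quot_trigraph G P =
    \<lparr> verts = P,
      edges = {{U, W} | U W. U \<in> P \<and> W \<in> P \<and> U \<noteq> W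
                 \<and> (\<exists>u\<in>U. \<exists>w\<in>W. {u, w} \<in> edges G)},
      red = {{U, W} | U W. U \<in> P \<and> W \<in> P \<and> U \<noteq> W
                 \<and> (\<exists>u\<in>U. \<exists>w\<in>W. {u, w} \<in> edges G)
                 \<and> \<not> (\<forall>u\<in>U. \<forall>w\<in>W. {u, w} \<in> black G)} \<rparr>"

definition singletons :: "'a set \<Rightarrow> 'a set set" where
  "singletons V = (\<lambda>v. {v}) ` V"

definition merge_step :: "'a set set \<Rightarrow> 'a set set \<Rightarrow> bool" where
  "merge_step P Q \<longleftrightarrow> (\<exists>U\<in>P. \<exists>W\<in>P. U \<noteq> W \<and> Q = insert (U \<union> W) (P - {U, W}))"

text \<open>A partial contraction sequence P_n, ..., P_i, given as the list [P_n, ..., P_i].\<close>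
definition partial_contraction_sequence :: "'a trigraph \<Rightarrow> 'a set set list \<Rightarrow> bool" where
  "partial_contraction_sequence G ps \<longleftrightarrow>
     ps \<noteq> [] \<and> hd ps = singletons (verts G)
     \<and> (\<forall>k. Suc k < length ps \<longrightarrow> merge_step (ps ! k) (ps ! Suc k))"

definition seq_width :: "'a trigraph \<Rightarrow> 'a set set list \<Rightarrow> nat" where
  "seq_width G ps = Max (insert 0 ((\<lambda>P. max_red_degree (quot_trigraph G P)) ` set ps))"

end

theory Submission
  imports Defs
begin


definition nbrs :: "'a trigraph \<Rightarrow> 'a set set \<Rightarrow> 'a set \<Rightarrow> 'a set set" where
  "nbrs G P X = {W \<in> P. W \<noteq> X \<and> (\<exists>u\<in>X. \<exists>w\<in>W. {u, w} \<in> edges G)}"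

lemma verts_quot[simp]: "verts (quot_trigraph G P) = P"
  by (simp add: quot_trigraph_def)

lemma edges_quot_iff:
  assumes "U \<in> P" "W \<in> P"
  shows "{U, W} \<in> edges (quot_trigraph G P) \<longleftrightarrow> W \<in> nbrs G P U"
proof
  assume "{U, W} \<in> edges (quot_trigraph G P)"
  then obtain U' W' where e: "{U, W} = {U', W'}" "U' \<in> P" "W' \<in> P" "U' \<noteq> W'"
    "\<exists>u\<in>U'. \<exists>w\<in>W'. {u, w} \<in> edges G"
    unfolding quot_trigraph_def by auto
  from e(1) have "(U = U' \<and> W = W') \<or> (U = W' \<and> W = U')" by (simp add: doubleton_eq_iff)
  then show "W \<in> nbrs G P U"
  proof
    assume "U = U' \<and> W = W'" then show ?thesis using e assms unfolding nbrs_def by auto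
  next
    assume a: "U = W' \<and> W = U'"
    then obtain u w where "u \<in> W" "w \<in> U" "{u, w} \<in> edges G" using e by auto
    then have "\<exists>u\<in>U. \<exists>w\<in>W. {u, w} \<in> edges G" by (metis insert_commute)
    then show ?thesis using e a assms unfolding nbrs_def by auto
  qed
next
  assume "W \<in> nbrs G P U"
  then show "{U, W} \<in> edges (quot_trigraph G P)"
    using assms unfolding nbrs_def quot_trigraph_def by auto
qed

lemma quot_edge_set:
  assumes "X \<in> P"
  shows "{e \<in> edges (quot_trigraph G P). X \<in> e} = (\<lambda>W. {X, W}) ` nbrs G P X"
proof
  show "{e \<in> edges (quot_trigraph G P). X \<in> e} \<subseteq> (\<lambda>W. {X, W}) ` nbrs G P X"
  proof
    fix e assume "e \<in> {e \<in> edges (quot_trigraph G P). X \<in> e}"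
    then have e: "e \<in> edges (quot_trigraph G P)" "X \<in> e" by auto
    then obtain U W where uw: "e = {U, W}" "U \<in> P" "W \<in> P"
      unfolding quot_trigraph_def by auto
    show "e \<in> (\<lambda>W. {X, W}) ` nbrs G P X"
    proof (cases "X = U")
      case True
      then have "W \<in> nbrs G P X" using edges_quot_iff[OF uw(2,3)] e uw by simp
      then show ?thesis using uw True by blast
    next
      case False
      then have xw: "X = W" using e uw by auto
      then have "{W, U} \<in> edges (quot_trigraph G P)" using e uw by (simp add: insert_commute)
      then have "U \<in> nbrs G P X" using edges_quot_iff[OF uw(3,2)] xw by simp
      then show ?thesis using uw xw by (auto simp: insert_commute)
    qed
  qed
next
  show "(\<lambda>W. {X, W}) ` nbrs G P X \<subseteq> {e \<in> edges (quot_trigraph G P). X \<in> e}"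
    using edges_quot_iff[OF assms] unfolding nbrs_def by auto
qed

lemma degree_quot:
  assumes "X \<in> P"
  shows "degree (quot_trigraph G P) X = card (nbrs G P X)"
proof -
  have "inj_on (\<lambda>W. {X, W}) (nbrs G P X)"
    unfolding inj_on_def nbrs_def by (auto simp: doubleton_eq_iff)
  then show ?thesis unfolding degree_def quot_edge_set[OF assms] by (simp add: card_image)
qed

lemma red_le_degree_quot:
  assumes "finite P" "X \<in> P"
  shows "red_degree (quot_trigraph G P) X \<le> degree (quot_trigraph G P) X"
proof -
  have fin: "finite {e \<in> edges (quot_trigraph G P). X \<in> e}"
    unfolding quot_edge_set[OF assms(2)] nbrs_def using assms(1) by simp
  have "{e \<in> red (quot_trigraph G P). X \<in> e} \<subseteq> {e \<in> edges (quot_trigraph G P). X \<in> e}"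
    unfolding quot_trigraph_def by auto
  then show ?thesis unfolding red_degree_def degree_def using fin by (rule card_mono[rotated])
qed

lemma mrd_le:
  assumes "finite P" "\<And>X. X \<in> P \<Longrightarrow> card (nbrs G P X) \<le> w"
  shows "max_red_degree (quot_trigraph G P) \<le> w"
proof -
  have "\<forall>X\<in>P. red_degree (quot_trigraph G P) X \<le> w"
    using red_le_degree_quot[OF assms(1)] degree_quot assms(2) by (metis le_trans)
  then show ?thesis unfolding max_red_degree_def using assms(1) by simp
qed

lemma md_le:
  assumes "finite P" "\<And>X. X \<in> P \<Longrightarrow> card (nbrs G P X) \<le> w"
  shows "max_degree (quot_trigraph G P) \<le> w"
proof -
  have "\<forall>X\<in>P. degree (quot_trigraph G P) X \<le> w"
    using degree_quot assms(2) by metis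
  then show ?thesis unfolding max_degree_def using assms(1) by simp
qed

lemma md_ge:
  assumes "finite P" "X \<in> P"
  shows "card (nbrs G P X) \<le> max_degree (quot_trigraph G P)"
proof -
  have "degree (quot_trigraph G P) X \<le> max_degree (quot_trigraph G P)"
    unfolding max_degree_def using assms by (intro Max_ge) auto
  then show ?thesis using degree_quot[OF assms(2)] by simp
qed

lemma mrd_le_md:
  assumes "finite P"
  shows "max_red_degree (quot_trigraph G P) \<le> max_degree (quot_trigraph G P)"
  using mrd_le[OF assms md_ge[OF assms]] .

lemma singletons_md:
  assumes "is_trigraph G"
  shows "max_degree (quot_trigraph G (singletons (verts G))) \<le> max_degree G"
proof -
  let ?V = "verts G"
  have finV: "finite ?V" using assms unfolding is_trigraph_def by simp
  have finE: "finite (edges G)"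
  proof (rule finite_subset)
    show "edges G \<subseteq> Pow ?V" using assms unfolding is_trigraph_def by auto
  qed (use finV in simp)
  show ?thesis
  proof (rule md_le)
    show "finite (singletons ?V)" unfolding singletons_def using finV by simp
  next
    fix X assume "X \<in> singletons ?V"
    then obtain v where v: "v \<in> ?V" "X = {v}" unfolding singletons_def by auto
    have "nbrs G (singletons ?V) X \<subseteq> (\<lambda>e. e - {v}) ` {e \<in> edges G. v \<in> e}"
    proof
      fix W assume "W \<in> nbrs G (singletons ?V) X"
      then obtain w where w: "W = {w}" "w \<noteq> v" "{v, w} \<in> edges G"
        unfolding nbrs_def singletons_def v(2) by auto
      then have "W = {v, w} - {v}" by auto
      then show "W \<in> (\<lambda>e. e - {v}) ` {e \<in> edges G. v \<in> e}" using w by blast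
    qed
    then have "card (nbrs G (singletons ?V) X) \<le> card ((\<lambda>e. e - {v}) ` {e \<in> edges G. v \<in> e})"
      by (rule card_mono[rotated]) (use finE in simp)
    also have "\<dots> \<le> card {e \<in> edges G. v \<in> e}" by (rule card_image_le) (use finE in simp)
    also have "\<dots> = degree G v" unfolding degree_def ..
    also have "\<dots> \<le> max_degree G" unfolding max_degree_def using finV v by (intro Max_ge) auto
    finally show "card (nbrs G (singletons ?V) X) \<le> max_degree G" .
  qed
qed





locale porb = fixes s :: "'b \<Rightarrow> 'b" and P :: "'b set"
  assumes finP: "finite P" and bij: "bij_betw s P P"
begin

lemma fp_bij: "bij_betw (s^^i) P P" by (rule bij_betw_funpow[OF bij])
lemma fp_in: "A \<in> P \<Longrightarrow> (s^^i) A \<in> P" using fp_bij bij_betw_apply by metis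
lemma fp_inj: "inj_on (s^^i) P" using fp_bij bij_betw_imp_inj_on by metis

lemma fp_comm: "(s^^m) ((s^^i) A) = (s^^i) ((s^^m) A)"
  by (metis add.commute comp_apply funpow_add)

lemma fp_split: "i \<le> j \<Longrightarrow> (s^^j) A = (s^^i) ((s^^(j-i)) A)"
proof -
  assume "i \<le> j"
  then have "(s^^j) A = (s^^(i + (j-i))) A" by simp
  also have "\<dots> = (s^^i) ((s^^(j-i)) A)" by (simp add: funpow_add)
  finally show ?thesis .
qed

lemma exists_period: assumes "A \<in> P" shows "\<exists>n>0. (s^^n) A = A"
proof -
  have "\<not> inj_on (\<lambda>i. (s^^i) A) {..card P}"
  proof
    assume "inj_on (\<lambda>i. (s^^i) A) {..card P}"
    then have "card ((\<lambda>i. (s^^i) A) ` {..card P}) = Suc (card P)" by (simp add: card_image)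
    moreover have "(\<lambda>i. (s^^i) A) ` {..card P} \<subseteq> P" using fp_in assms by auto
    then have "card ((\<lambda>i. (s^^i) A) ` {..card P}) \<le> card P" by (rule card_mono[OF finP])
    ultimately show False by simp
  qed
  then obtain i j where ij0: "i \<noteq> j" "(s^^i) A = (s^^j) A"
    unfolding inj_on_def by blast
  have "\<exists>i j. i < j \<and> (s^^i) A = (s^^j) A"
  proof (cases "i < j")
    case True then show ?thesis using ij0 by blast
  next
    case False then have "j < i" using ij0 by simp
    then show ?thesis using ij0 by (intro exI[of _ j] exI[of _ i]) simp
  qed
  then obtain i j where ij: "i < j" "(s^^i) A = (s^^j) A" by blast
  have "(s^^j) A = (s^^i) ((s^^(j-i)) A)" using ij(1) fp_split by simp
  then have "(s^^i) ((s^^(j-i)) A) = (s^^i) A" using ij(2) by simp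
  then have "(s^^(j-i)) A = A" using fp_inj fp_in assms unfolding inj_on_def by blast
  then show ?thesis using ij(1) by (intro exI[of _ "j-i"]) auto
qed

definition per where "per A = (LEAST n. 0 < n \<and> (s^^n) A = A)"

lemma per: assumes "A \<in> P" shows "0 < per A" "(s^^per A) A = A"
proof -
  have "0 < per A \<and> (s^^per A) A = A" unfolding per_def
    by (rule LeastI_ex) (use exists_period[OF assms] in auto)
  then show "0 < per A" "(s^^per A) A = A" by auto
qed

lemma per_min: "0 < m \<Longrightarrow> m < per A \<Longrightarrow> (s^^m) A \<noteq> A"
  unfolding per_def using not_less_Least by blast

lemma shift_fix: assumes "A \<in> P" shows "(s^^m) ((s^^i) A) = (s^^i) A \<longleftrightarrow> (s^^m) A = A"
proof
  assume "(s^^m) ((s^^i) A) = (s^^i) A"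
  then have "(s^^i) ((s^^m) A) = (s^^i) A" by (simp add: fp_comm)
  then show "(s^^m) A = A" using fp_inj fp_in assms by (metis inj_onD)
qed (simp add: fp_comm)

lemma per_shift: "A \<in> P \<Longrightarrow> per ((s^^i) A) = per A"
  unfolding per_def using shift_fix by simp

lemma fp_mod: "A \<in> P \<Longrightarrow> (s^^(m mod per A)) A = (s^^m) A"
  using funpow_mod_eq per(2) by metis

lemma uniq: assumes "A \<in> P" "j1 < per A" "j2 < per A" "(s^^j1) A = (s^^j2) A" shows "j1 = j2"
proof (rule ccontr)
  assume "j1 \<noteq> j2"
  then consider "j1 < j2" | "j2 < j1" by linarith
  then show False
  proof cases
    case 1
    have "(s^^j2) A = (s^^j1) ((s^^(j2-j1)) A)" using 1 fp_split by simp
    then have "(s^^j1) ((s^^(j2-j1)) A) = (s^^j1) A" using assms(4) by simp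
    then have "(s^^(j2-j1)) A = A" using fp_inj fp_in assms(1) unfolding inj_on_def by blast
    then show False using per_min[of "j2-j1" A] 1 assms by auto
  next
    case 2
    have "(s^^j1) A = (s^^j2) ((s^^(j1-j2)) A)" using 2 fp_split by simp
    then have "(s^^j2) ((s^^(j1-j2)) A) = (s^^j2) A" using assms(4) by simp
    then have "(s^^(j1-j2)) A = A" using fp_inj fp_in assms(1) unfolding inj_on_def by blast
    then show False using per_min[of "j1-j2" A] 2 assms by auto
  qed
qed

definition orb where "orb A = range (\<lambda>i. (s^^i) A)"

lemma orb_shift: assumes "A \<in> P" shows "orb ((s^^i) A) = orb A"
proof
  show "orb ((s^^i) A) \<subseteq> orb A"
  proof
    fix X assume "X \<in> orb ((s^^i) A)"
    then obtain j where j: "X = (s^^j) ((s^^i) A)" unfolding orb_def by auto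
    have "X = (s^^(j+i)) A" unfolding j by (simp add: funpow_add)
    then show "X \<in> orb A" unfolding orb_def by (metis rangeI)
  qed
  show "orb A \<subseteq> orb ((s^^i) A)"
  proof
    fix X assume "X \<in> orb A"
    then obtain j where j: "X = (s^^j) A" unfolding orb_def by auto
    have "(s^^(j + per A * i - i)) ((s^^i) A) = (s^^(j + per A * i)) A"
    proof -
      have "i \<le> per A * i" using per(1)[OF assms] by simp
      then have "(j + per A * i - i) + i = j + per A * i" by linarith
      then show ?thesis by (metis comp_apply funpow_add)
    qed
    also have "\<dots> = (s^^((j + per A * i) mod per A)) A" by (rule fp_mod[OF assms, symmetric])
    also have "(j + per A * i) mod per A = j mod per A" by simp
    also have "(s^^(j mod per A)) A = (s^^j) A" by (rule fp_mod[OF assms])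
    finally have "X = (s^^(j + per A * i - i)) ((s^^i) A)" using j by simp
    then show "X \<in> orb ((s^^i) A)" unfolding orb_def by blast
  qed
qed

definition rep where "rep A = (SOME R. R \<in> orb A)"

lemma rep_shift: "A \<in> P \<Longrightarrow> rep ((s^^i) A) = rep A"
  unfolding rep_def using orb_shift by simp

lemma rep_orb: "rep A \<in> orb A"
  unfolding rep_def orb_def by (rule someI_ex) auto

lemma rep_in: assumes "A \<in> P" shows "rep A \<in> P"
proof -
  obtain r where "rep A = (s^^r) A" using rep_orb[of A] unfolding orb_def by auto
  then show ?thesis using fp_in assms by simp
qed

lemma in_orb_rep: assumes "A \<in> P" shows "A \<in> orb (rep A)"
proof -
  obtain r where "rep A = (s^^r) A" using rep_orb unfolding orb_def by auto
  then have "orb (rep A) = orb A" using orb_shift assms by simp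
  then show ?thesis unfolding orb_def by (metis funpow_0 rangeI)
qed

lemma per_rep: assumes "A \<in> P" shows "per (rep A) = per A"
proof -
  obtain r where "rep A = (s^^r) A" using rep_orb unfolding orb_def by auto
  then show ?thesis using per_shift assms by simp
qed

definition idx where "idx A = (LEAST i. (s^^i) (rep A) = A)"

lemma idx: assumes "A \<in> P" shows "(s^^idx A) (rep A) = A"
proof -
  obtain i where "A = (s^^i) (rep A)" using in_orb_rep[OF assms] unfolding orb_def by auto
  then have "\<exists>i. (s^^i) (rep A) = A" by metis
  then show ?thesis unfolding idx_def by (rule LeastI_ex)
qed

lemma idx_lt: assumes "A \<in> P" shows "idx A < per A"
proof -
  obtain i where i0: "A = (s^^i) (rep A)" using in_orb_rep[OF assms] unfolding orb_def by auto
  then have i: "(s^^i) (rep A) = A" by (rule sym)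
  have "(s^^(i mod per (rep A))) (rep A) = A" using fp_mod[OF rep_in[OF assms]] i by simp
  then have "idx A \<le> i mod per (rep A)" unfolding idx_def by (rule Least_le)
  also have "\<dots> < per (rep A)" using per(1)[OF rep_in[OF assms]] by simp
  finally show ?thesis using per_rep[OF assms] by simp
qed

lemma idx_shift: assumes "B \<in> P" shows "idx ((s^^i) B) = (idx B + i) mod per B"
proof -
  define R where "R = rep B"
  have R: "R \<in> P" unfolding R_def by (rule rep_in[OF assms])
  have pR: "per R = per B" unfolding R_def by (rule per_rep[OF assms])
  have r2: "rep ((s^^i) B) = R" unfolding R_def by (rule rep_shift[OF assms])
  have "(s^^((idx B + i) mod per R)) R = (s^^(idx B + i)) R" by (rule fp_mod[OF R])
  then have "(s^^((idx B + i) mod per B)) R = (s^^(idx B + i)) R" unfolding pR .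
  also have "\<dots> = (s^^i) ((s^^idx B) R)" by (subst add.commute) (simp add: funpow_add)
  also have "(s^^idx B) R = B" unfolding R_def by (rule idx[OF assms])
  finally have e1: "(s^^((idx B + i) mod per B)) R = (s^^i) B" .
  have e2': "(s^^(idx ((s^^i) B))) (rep ((s^^i) B)) = (s^^i) B" by (rule idx[OF fp_in[OF assms]])
  have e2: "(s^^(idx ((s^^i) B))) R = (s^^i) B" using e2' unfolding r2 .
  have l2': "idx ((s^^i) B) < per ((s^^i) B)" by (rule idx_lt[OF fp_in[OF assms]])
  have l2: "idx ((s^^i) B) < per R" using l2' unfolding per_shift[OF assms] pR .
  have l1: "(idx B + i) mod per B < per R" unfolding pR using per(1)[OF assms] by (rule mod_less_divisor)
  have "idx ((s^^i) B) = (idx B + i) mod per B"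
    by (rule uniq[OF R l2 l1]) (simp only: e1 e2)
  then show ?thesis .
qed

lemma rep_idx_inj: assumes "A \<in> P" "B \<in> P" "rep A = rep B" "idx A = idx B" shows "A = B"
proof -
  have "A = (s^^idx A) (rep A)" using idx[OF assms(1)] by (rule sym)
  also have "\<dots> = (s^^idx B) (rep B)" unfolding assms(3,4) ..
  also have "\<dots> = B" by (rule idx[OF assms(2)])
  finally show ?thesis .
qed

lemma per_le: assumes "A \<in> P" shows "per A \<le> card P"
proof (rule ccontr)
  assume "\<not> per A \<le> card P"
  then have "inj_on (\<lambda>i. (s^^i) A) {..<per A}"
    using uniq[OF assms] unfolding inj_on_def by (meson lessThan_iff)
  then have "card ((\<lambda>i. (s^^i) A) ` {..<per A}) = per A" by (simp add: card_image)
  moreover have "(\<lambda>i. (s^^i) A) ` {..<per A} \<subseteq> P" using fp_in assms by auto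
  then have "card ((\<lambda>i. (s^^i) A) ` {..<per A}) \<le> card P" by (rule card_mono[OF finP])
  ultimately show False using \<open>\<not> per A \<le> card P\<close> by simp
qed

end



lemma div_bounds: fixes x m :: nat assumes "0 < m" shows "x div m * m \<le> x" "x < (x div m + 1) * m"
proof -
  have e: "x = x div m * m + x mod m" by simp
  have "x mod m < m" using assms by simp
  show "x div m * m \<le> x" using e by linarith
  have "x < x div m * m + m" using e \<open>x mod m < m\<close> by linarith
  then show "x < (x div m + 1) * m" by (simp add: algebra_simps)
qed

lemma arith4: fixes n m s :: nat assumes n: "0 < n" and m: "0 < m"
  shows "card ((\<lambda>i. ((s+i) mod n) div m) ` {..<2*m}) \<le> 4"
proof -
  define x0 where "x0 = s mod n"
  have x0n: "x0 < n" unfolding x0_def using n by simp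
  have f: "((s+i) mod n) div m = ((x0+i) mod n) div m" for i
    unfolding x0_def by (simp add: mod_add_left_eq)
  let ?S = "(\<lambda>i. ((s+i) mod n) div m) ` {..<2*m}"
  have fin: "finite ?S" by simp
  show ?thesis
  proof (cases "n \<le> 2*m")
    case True
    have "?S \<subseteq> {..<2}"
    proof
      fix v assume "v \<in> ?S"
      then obtain i where v: "v = ((s+i) mod n) div m" by auto
      have "(s+i) mod n < 2 * m" using True n by (meson mod_less_divisor order_less_le_trans)
      then have "(s+i) mod n < m * 2" by (simp add: mult.commute)
      then show "v \<in> {..<2}" unfolding v using less_mult_imp_div_less by simp
    qed
    then have "card ?S \<le> card {..<2::nat}" by (rule card_mono[rotated]) simp
    then show ?thesis by simp
  next
    case False
    define q where "q = x0 div m"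
    show ?thesis
    proof (cases "x0 + 2*m \<le> n")
      case True
      have "?S \<subseteq> {q..q+2}"
      proof
        fix v assume "v \<in> ?S"
        then obtain i where i: "i < 2*m" and v: "v = ((s+i) mod n) div m" by auto
        have lt: "x0 + i < n" using True i by linarith
        have v2: "v = (x0 + i) div m" unfolding v f using lt by simp
        have "q \<le> v" unfolding v2 q_def by (simp add: div_le_mono)
        moreover have "v \<le> q + 2"
        proof -
          have "x0 + i < (q + 1) * m + 2 * m" using div_bounds(2)[OF m, of x0] i unfolding q_def by linarith
          also have "\<dots> = (q + 3) * m" by (simp add: algebra_simps)
          finally have "(x0 + i) div m < q + 3" using less_mult_imp_div_less by blast
          then show ?thesis unfolding v2 by simp
        qed
        ultimately show "v \<in> {q..q+2}" by simp
      qed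
      then have "card ?S \<le> card {q..q+2}" by (rule card_mono[rotated]) simp
      then show ?thesis by simp
    next
      case wrap: False
      define L where "L = (n - 1) div m"
      define W where "W = (x0 + 2*m - 1 - n) div m"
      have "?S \<subseteq> {q..L} \<union> {..W}"
      proof
        fix v assume "v \<in> ?S"
        then obtain i where i: "i < 2*m" and v: "v = ((s+i) mod n) div m" by auto
        show "v \<in> {q..L} \<union> {..W}"
        proof (cases "x0 + i < n")
          case True
          have v2: "v = (x0 + i) div m" unfolding v f using True by simp
          have "q \<le> v" unfolding v2 q_def by (simp add: div_le_mono)
          moreover have "v \<le> L" unfolding v2 L_def using True by (simp add: div_le_mono)
          ultimately show ?thesis by simp
        next
          case False
          have lt: "x0 + i - n < n" using x0n i \<open>\<not> n \<le> 2*m\<close> by linarith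
          have "(x0 + i) mod n = x0 + i - n"
            using False lt by (metis le_mod_geq linorder_not_less mod_less)
          then have v2: "v = (x0 + i - n) div m" unfolding v f by simp
          have "v \<le> W" unfolding v2 W_def using i by (intro div_le_mono) linarith
          then show ?thesis by simp
        qed
      qed
      then have "card ?S \<le> card ({q..L} \<union> {..W})" by (rule card_mono[rotated]) simp
      also have "\<dots> \<le> card {q..L} + card {..W}" by (rule card_Un_le)
      also have "\<dots> = (L + 1 - q) + (W + 1)" by simp
      also have "\<dots> \<le> 4"
      proof -
        have a: "W * m \<le> x0 + 2*m - 1 - n" unfolding W_def by (rule div_bounds(1)[OF m])
        have b: "L * m \<le> n - 1" unfolding L_def by (rule div_bounds(1)[OF m])
        have c: "x0 < (q + 1) * m" unfolding q_def by (rule div_bounds(2)[OF m])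
        have "W * m + L * m < (q + 3) * m" using a b c wrap n by (simp add: algebra_simps)
        then have "(W + L) * m < (q + 3) * m" by (simp add: algebra_simps)
        then have "W + L < q + 3" by (simp add: mult_less_cancel2)
        moreover have "q \<le> L" unfolding q_def L_def using x0n by (intro div_le_mono) linarith
        ultimately show ?thesis by linarith
      qed
      finally show ?thesis .
    qed
  qed
qed




definition stp :: "'a trigraph \<Rightarrow> nat \<Rightarrow> 'a set set \<Rightarrow> 'a set set \<Rightarrow> bool" where
  "stp G w P Q \<longleftrightarrow> merge_step P Q \<and> max_red_degree (quot_trigraph G Q) \<le> w"

locale core = porb s P for s :: "'a set \<Rightarrow> 'a set" and P +
  fixes G :: "'a trigraph" and D :: nat
  assumes ne: "\<And>A. A \<in> P \<Longrightarrow> A \<noteq> {}"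
  and disj: "\<And>A B. A \<in> P \<Longrightarrow> B \<in> P \<Longrightarrow> A \<noteq> B \<Longrightarrow> A \<inter> B = {}"
  and aut: "\<And>U W. U \<in> P \<Longrightarrow> W \<in> P \<Longrightarrow> W \<in> nbrs G P U \<longleftrightarrow> s W \<in> nbrs G P (s U)"
  and degP: "\<And>U. U \<in> P \<Longrightarrow> card (nbrs G P U) \<le> D"
begin

lemma aut_pow: "U \<in> P \<Longrightarrow> W \<in> P \<Longrightarrow> W \<in> nbrs G P U \<longleftrightarrow> (s^^i) W \<in> nbrs G P ((s^^i) U)"
proof (induction i)
  case 0 then show ?case by simp
next
  case (Suc i)
  have "(s^^i) W \<in> nbrs G P ((s^^i) U) \<longleftrightarrow> s ((s^^i) W) \<in> nbrs G P (s ((s^^i) U))"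
    by (rule aut[OF fp_in[OF Suc.prems(1)] fp_in[OF Suc.prems(2)]])
  then show ?case using Suc by simp
qed

lemma nb_shift: assumes "U \<in> P" shows "nbrs G P ((s^^i) U) \<subseteq> (s^^i) ` nbrs G P U"
proof
  fix W' assume W': "W' \<in> nbrs G P ((s^^i) U)"
  then have "W' \<in> P" unfolding nbrs_def by auto
  then obtain W where W: "W \<in> P" "W' = (s^^i) W"
    using fp_bij[of i] unfolding bij_betw_def by auto
  then have "W \<in> nbrs G P U" using aut_pow[OF assms W(1), of i] W' by simp
  then show "W' \<in> (s^^i) ` nbrs G P U" using W by blast
qed

definition C :: "('a set \<Rightarrow> 'k) \<Rightarrow> 'k \<Rightarrow> 'a set" where
  "C \<kappa> z = \<Union>{A \<in> P. \<kappa> A = z}"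

definition Qof :: "('a set \<Rightarrow> 'k) \<Rightarrow> 'a set set" where
  "Qof \<kappa> = C \<kappa> ` \<kappa> ` P"

lemma finQ: "finite (Qof \<kappa>)" unfolding Qof_def using finP by simp

lemma count:
  assumes z: "z \<in> \<kappa> ` P"
  shows "card (nbrs G (Qof \<kappa>) (C \<kappa> z)) \<le> card (\<kappa> ` \<Union>(nbrs G P ` {A \<in> P. \<kappa> A = z}))"
proof -
  let ?S = "\<Union>(nbrs G P ` {A \<in> P. \<kappa> A = z})"
  have finS: "finite ?S" using finP by (rule finite_subset[rotated]) (auto simp: nbrs_def)
  have "nbrs G (Qof \<kappa>) (C \<kappa> z) \<subseteq> C \<kappa> ` \<kappa> ` ?S"
  proof
    fix Y assume Y: "Y \<in> nbrs G (Qof \<kappa>) (C \<kappa> z)"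
    then obtain u w where uw: "u \<in> C \<kappa> z" "w \<in> Y" "{u, w} \<in> edges G" "Y \<noteq> C \<kappa> z" "Y \<in> Qof \<kappa>"
      unfolding nbrs_def by auto
    then obtain B0 where B0: "B0 \<in> P" "Y = C \<kappa> (\<kappa> B0)" unfolding Qof_def by auto
    obtain A where A: "A \<in> P" "\<kappa> A = z" "u \<in> A" using uw(1) unfolding C_def by auto
    obtain B where B: "B \<in> P" "\<kappa> B = \<kappa> B0" "w \<in> B" using uw(2) B0(2) unfolding C_def by auto
    have "A \<noteq> B" using A B B0 uw(4) by auto
    then have "B \<in> nbrs G P A" using A B uw(3) unfolding nbrs_def by auto
    then have "B \<in> ?S" using A by auto
    moreover have "Y = C \<kappa> (\<kappa> B)" using B(2) B0(2) by simp
    ultimately show "Y \<in> C \<kappa> ` \<kappa> ` ?S" by blast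
  qed
  then have "card (nbrs G (Qof \<kappa>) (C \<kappa> z)) \<le> card (C \<kappa> ` \<kappa> ` ?S)"
    by (rule card_mono[rotated]) (use finS in simp)
  also have "\<dots> \<le> card (\<kappa> ` ?S)" by (rule card_image_le) (use finS in simp)
  finally show ?thesis .
qed

lemma gen_bound:
  assumes R: "R \<in> P"
  and c1: "\<And>A. A \<in> P \<Longrightarrow> \<kappa> A = z \<Longrightarrow> \<exists>i\<in>I. A = (s^^i) R"
  and c2: "\<And>B. B \<in> nbrs G P R \<Longrightarrow> card (\<kappa> ` ((\<lambda>i. (s^^i) B) ` I)) \<le> c"
  shows "card (\<kappa> ` \<Union>(nbrs G P ` {A \<in> P. \<kappa> A = z})) \<le> D * c"
proof -
  let ?N = "nbrs G P R"
  let ?F = "\<lambda>B. \<kappa> ` ((\<lambda>i. (s^^i) B) ` I)"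
  have finN: "finite ?N" using finP by (rule finite_subset[rotated]) (auto simp: nbrs_def)
  have sub: "\<kappa> ` \<Union>(nbrs G P ` {A \<in> P. \<kappa> A = z}) \<subseteq> (\<Union>B\<in>?N. ?F B)"
  proof
    fix v assume "v \<in> \<kappa> ` \<Union>(nbrs G P ` {A \<in> P. \<kappa> A = z})"
    then obtain A x where Ax: "A \<in> P" "\<kappa> A = z" "x \<in> nbrs G P A" "v = \<kappa> x" by auto
    obtain i where i: "i \<in> I" "A = (s^^i) R" using c1[OF Ax(1,2)] by auto
    have "x \<in> (s^^i) ` ?N" using nb_shift[OF R, of i] Ax(3) i(2) by auto
    then obtain B where "B \<in> ?N" "x = (s^^i) B" by auto
    then show "v \<in> (\<Union>B\<in>?N. ?F B)" using i(1) Ax(4) by blast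
  qed
  have fin2: "finite (\<Union>B\<in>?N. ?F B)"
  proof (rule finite_subset[of _ "\<kappa> ` P"])
    show "(\<Union>B\<in>?N. ?F B) \<subseteq> \<kappa> ` P"
    proof
      fix v assume "v \<in> (\<Union>B\<in>?N. ?F B)"
      then obtain B i where "B \<in> ?N" "v = \<kappa> ((s^^i) B)" by auto
      moreover then have "B \<in> P" unfolding nbrs_def by auto
      ultimately show "v \<in> \<kappa> ` P" using fp_in by blast
    qed
  qed (use finP in simp)
  have "card (\<kappa> ` \<Union>(nbrs G P ` {A \<in> P. \<kappa> A = z})) \<le> card (\<Union>B\<in>?N. ?F B)"
    by (rule card_mono[OF fin2 sub])
  also have "\<dots> \<le> (\<Sum>B\<in>?N. card (?F B))" by (rule card_UN_le[OF finN])
  also have "\<dots> \<le> (\<Sum>B\<in>?N. c)" by (rule sum_mono) (rule c2)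
  also have "\<dots> = card ?N * c" by simp
  also have "\<dots> \<le> D * c" using degP[OF R] by simp
  finally show ?thesis .
qed


lemma rep_rep: assumes "A \<in> P" shows "rep (rep A) = rep A"
proof -
  obtain r where "rep A = (s^^r) A" using rep_orb[of A] unfolding orb_def by auto
  then show ?thesis using rep_shift[OF assms, of r] by simp
qed

lemma idx_rep: assumes "A \<in> P" shows "idx (rep A) = 0"
proof -
  have "(s^^0) (rep (rep A)) = rep A" using rep_rep[OF assms] by simp
  then show ?thesis unfolding idx_def by (rule Least_eq_0)
qed

lemma idx_rep_shift: assumes "A \<in> P" "i < per (rep A)" shows "idx ((s^^i) (rep A)) = i"
  using idx_shift[OF rep_in[OF assms(1)], of i] idx_rep[OF assms(1)] assms(2) by simp

definition psi :: "nat \<Rightarrow> ('a set \<times> nat) set \<Rightarrow> 'a set \<Rightarrow> nat \<Rightarrow> 'a set \<times> nat \<times> nat" where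
  "psi k M R x = (if (R, x div 2) \<in> M then (R, Suc k, x div 2) else (R, k, x))"

definition key :: "nat \<Rightarrow> ('a set \<times> nat) set \<Rightarrow> 'a set \<Rightarrow> 'a set \<times> nat \<times> nat" where
  "key k M A = psi k M (rep A) (idx A div 2^k)"

lemma fst_psi[simp]: "fst (psi k M R x) = R" unfolding psi_def by simp

lemma fst_key: "fst (key k M A) = rep A" unfolding key_def by simp

lemma div_iv: fixes i m y :: nat assumes "0 < m" "i div m = y" shows "y * m \<le> i" "i < y * m + m"
  using div_bounds[OF assms(1), of i] assms(2) by (auto simp: algebra_simps)

lemma key_bound:
  assumes z: "z \<in> key k M ` P"
  shows "card (nbrs G (Qof (key k M)) (C (key k M) z)) \<le> D * 4"
proof -
  obtain A0 where A0: "A0 \<in> P" "z = key k M A0" using z by auto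
  define R where "R = rep A0"
  have R: "R \<in> P" unfolding R_def by (rule rep_in[OF A0(1)])
  have repR: "rep R = R" unfolding R_def by (rule rep_rep[OF A0(1)])
  have perR: "0 < per R" by (rule per(1)[OF R])
  define I where "I = {i. i < per R \<and> key k M ((s^^i) R) = z}"
  have keyR: "key k M ((s^^i) R) = psi k M R (i div 2^k)" if "i < per R" for i
  proof -
    have "rep ((s^^i) R) = R" using rep_shift[OF R, of i] repR by simp
    moreover have "idx ((s^^i) R) = i" using idx_rep_shift[OF A0(1), of i] that unfolding R_def by simp
    ultimately show ?thesis unfolding key_def by simp
  qed
  define x0 where "x0 = idx A0 div 2^k"
  have zx: "z = psi k M R x0" unfolding A0(2) key_def R_def x0_def ..
  have p2: "(0::nat) < 2^k" by simp
  obtain a where Isub: "I \<subseteq> {a..<a + 2*2^k}"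
  proof (cases "(R, x0 div 2) \<in> M")
    case True
    have "I \<subseteq> {x0 div 2 * (2^k*2)..<x0 div 2 * (2^k*2) + 2*2^k}"
    proof
      fix i assume "i \<in> I"
      have zz: "z = (R, Suc k, x0 div 2)" using zx True by (simp add: psi_def)
      from \<open>i \<in> I\<close> have i: "i < per R" "psi k M R (i div 2^k) = (R, Suc k, x0 div 2)"
        unfolding I_def using keyR zz by auto
      then have "i div 2^k div 2 = x0 div 2" unfolding psi_def by (auto split: if_splits)
      then have "i div (2^k*2) = x0 div 2" by (simp add: div_mult2_eq)
      from div_iv[OF _ this] show "i \<in> {x0 div 2 * (2^k*2)..<x0 div 2 * (2^k*2) + 2*2^k}" by simp
    qed
    then show ?thesis using that by blast
  next
    case False
    have "I \<subseteq> {x0 * 2^k..<x0 * 2^k + 2*2^k}"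
    proof
      fix i assume "i \<in> I"
      have zz: "z = (R, k, x0)" using zx False by (simp add: psi_def)
      from \<open>i \<in> I\<close> have i: "i < per R" "psi k M R (i div 2^k) = (R, k, x0)"
        unfolding I_def using keyR zz by auto
      then have "i div 2^k = x0" unfolding psi_def by (auto split: if_splits)
      from div_iv[OF p2 this] show "i \<in> {x0 * 2^k..<x0 * 2^k + 2*2^k}" by simp
    qed
    then show ?thesis using that by blast
  qed
  have "card (key k M ` \<Union>(nbrs G P ` {A \<in> P. key k M A = z})) \<le> D * 4"
  proof (rule gen_bound[OF R, of _ _ I])
    fix A assume A: "A \<in> P" "key k M A = z"
    have rA: "rep A = R" using A(2) zx fst_key[of k M A] by simp
    have "A = (s^^idx A) R" using idx[OF A(1)] rA by simp
    moreover have "idx A < per R" using idx_lt[OF A(1)] per_rep[OF A(1)] rA by simp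
    moreover have "key k M ((s^^idx A) R) = z" using A(2) \<open>A = (s^^idx A) R\<close> by simp
    ultimately show "\<exists>i\<in>I. A = (s^^i) R" unfolding I_def by blast
  next
    fix B assume "B \<in> nbrs G P R"
    then have B: "B \<in> P" unfolding nbrs_def by auto
    let ?X = "(\<lambda>j. ((idx B + a + j) mod per B) div 2^k) ` {..<2*2^k}"
    have "key k M ` ((\<lambda>i. (s^^i) B) ` I) \<subseteq> psi k M (rep B) ` ?X"
    proof
      fix v assume "v \<in> key k M ` ((\<lambda>i. (s^^i) B) ` I)"
      then obtain i where i: "i \<in> I" "v = key k M ((s^^i) B)" by auto
      have iin: "i \<in> {a..<a + 2*2^k}" using Isub i(1) by blast
      then have ia0: "a \<le> i" "i < a + 2*2^k" by auto
      then have ia: "a \<le> i" "i - a < 2*2^k" by linarith+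
      have "v = psi k M (rep B) (((idx B + i) mod per B) div 2^k)"
        unfolding i(2) key_def using rep_shift[OF B] idx_shift[OF B] by simp
      also have "idx B + i = idx B + a + (i - a)" using ia by simp
      finally show "v \<in> psi k M (rep B) ` ?X" using ia(2) by blast
    qed
    then have "card (key k M ` ((\<lambda>i. (s^^i) B) ` I)) \<le> card (psi k M (rep B) ` ?X)"
      by (rule card_mono[rotated]) simp
    also have "\<dots> \<le> card ?X" by (rule card_image_le) simp
    also have "\<dots> \<le> 4" by (rule arith4[OF per(1)[OF B] p2])
    finally show "card (key k M ` ((\<lambda>i. (s^^i) B) ` I)) \<le> 4" .
  qed
  then show ?thesis using count[OF z] by linarith
qed

lemma key_final: assumes "card P \<le> 2^K" "A \<in> P" shows "key K {} A = (rep A, K, 0)"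
proof -
  have "idx A < 2^K" using idx_lt[OF assms(2)] per_le[OF assms(2)] assms(1) by linarith
  then show ?thesis unfolding key_def psi_def by simp
qed

lemma final_bound:
  assumes K: "card P \<le> 2^K" and z: "z \<in> key K {} ` P"
  shows "card (nbrs G (Qof (key K {})) (C (key K {}) z)) \<le> D"
proof -
  obtain A0 where A0: "A0 \<in> P" "z = key K {} A0" using z by auto
  define R where "R = rep A0"
  have R: "R \<in> P" unfolding R_def by (rule rep_in[OF A0(1)])
  have "card (key K {} ` \<Union>(nbrs G P ` {A \<in> P. key K {} A = z})) \<le> D * 1"
  proof (rule gen_bound[OF R, of _ _ UNIV])
    fix A assume A: "A \<in> P" "key K {} A = z"
    have rA: "rep A = R" using A(2) A0(2) fst_key[of K "{}" A] fst_key[of K "{}" A0] unfolding R_def by simp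
    have "A = (s^^idx A) R" using idx[OF A(1)] rA by simp
    then show "\<exists>i\<in>UNIV. A = (s^^i) R" by blast
  next
    fix B assume "B \<in> nbrs G P R"
    then have B: "B \<in> P" unfolding nbrs_def by auto
    have "key K {} ` ((\<lambda>i. (s^^i) B) ` UNIV) \<subseteq> {(rep B, K, 0::nat)}"
      using key_final[OF K fp_in[OF B]] rep_shift[OF B] by auto
    then have "card (key K {} ` ((\<lambda>i. (s^^i) B) ` UNIV)) \<le> card {(rep B, K, 0::nat)}"
      by (intro card_mono) auto
    then show "card (key K {} ` ((\<lambda>i. (s^^i) B) ` UNIV)) \<le> 1" by simp
  qed
  then show ?thesis using count[OF z] by linarith
qed


lemma C_cong: "(\<And>A. A \<in> P \<Longrightarrow> \<kappa> A = \<kappa>' A) \<Longrightarrow> C \<kappa> z = C \<kappa>' z"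
  unfolding C_def by (metis (mono_tags, lifting) Collect_cong)

lemma Qof_cong: assumes "\<And>A. A \<in> P \<Longrightarrow> \<kappa> A = \<kappa>' A" shows "Qof \<kappa> = Qof \<kappa>'"
proof -
  have "Qof \<kappa> = (\<lambda>A. C \<kappa> (\<kappa> A)) ` P" unfolding Qof_def by (simp add: image_image)
  also have "\<dots> = (\<lambda>A. C \<kappa>' (\<kappa>' A)) ` P" using assms C_cong[of \<kappa> \<kappa>'] by (intro image_cong) auto
  also have "\<dots> = Qof \<kappa>'" unfolding Qof_def by (simp add: image_image)
  finally show ?thesis .
qed

lemma C_ne: "z \<in> \<kappa> ` P \<Longrightarrow> C \<kappa> z \<noteq> {}"
  unfolding C_def using ne by fastforce

lemma C_disj: assumes "z1 \<in> \<kappa> ` P" "z2 \<in> \<kappa> ` P" "z1 \<noteq> z2" shows "C \<kappa> z1 \<inter> C \<kappa> z2 = {}"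
proof -
  have "x \<notin> C \<kappa> z2" if xin: "x \<in> C \<kappa> z1" for x
  proof
    assume "x \<in> C \<kappa> z2"
    then obtain B where B: "B \<in> P" "\<kappa> B = z2" "x \<in> B" unfolding C_def by auto
    obtain A where A: "A \<in> P" "\<kappa> A = z1" "x \<in> A" using xin unfolding C_def by auto
    have "A \<noteq> B" using A B assms(3) by auto
    then show False using disj[OF A(1) B(1)] A B by auto
  qed
  then show ?thesis by auto
qed

lemma C_inj: "inj_on (C \<kappa>) (\<kappa> ` P)"
proof (rule inj_onI)
  fix z1 z2 assume z: "z1 \<in> \<kappa> ` P" "z2 \<in> \<kappa> ` P" "C \<kappa> z1 = C \<kappa> z2"
  show "z1 = z2"
  proof (rule ccontr)
    assume "z1 \<noteq> z2"
    then have "C \<kappa> z1 \<inter> C \<kappa> z2 = {}" by (rule C_disj[OF z(1) z(2)])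
    then show False using C_ne[OF z(1)] z(3) by simp
  qed
qed

lemma C_key: "A \<in> P \<Longrightarrow> A \<subseteq> C \<kappa> (\<kappa> A)" unfolding C_def by auto

lemma Qof_part:
  shows "\<Union>(Qof \<kappa>) = \<Union>P" "\<And>X. X \<in> Qof \<kappa> \<Longrightarrow> X \<noteq> {}"
    "\<And>X Y. X \<in> Qof \<kappa> \<Longrightarrow> Y \<in> Qof \<kappa> \<Longrightarrow> X \<noteq> Y \<Longrightarrow> X \<inter> Y = {}"
proof -
  show "\<Union>(Qof \<kappa>) = \<Union>P" unfolding Qof_def C_def by auto
  show "X \<noteq> {}" if Xin: "X \<in> Qof \<kappa>" for X
  proof -
    obtain z where "z \<in> \<kappa> ` P" "X = C \<kappa> z" using Xin unfolding Qof_def by auto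
    then show ?thesis using C_ne[of z \<kappa>] by simp
  qed
  show "X \<inter> Y = {}" if XY: "X \<in> Qof \<kappa>" "Y \<in> Qof \<kappa>" "X \<noteq> Y" for X Y
  proof -
    obtain z1 where z1: "z1 \<in> \<kappa> ` P" "X = C \<kappa> z1" using XY unfolding Qof_def by auto
    obtain z2 where z2: "z2 \<in> \<kappa> ` P" "Y = C \<kappa> z2" using XY unfolding Qof_def by auto
    have "z1 \<noteq> z2" using z1 z2 XY by auto
    then show ?thesis using C_disj[OF z1(1) z2(1)] z1 z2 by simp
  qed
qed

lemma Qof_inj: assumes h: "inj_on h (\<kappa> ` P)" shows "Qof (h \<circ> \<kappa>) = Qof \<kappa>"
proof -
  have e: "C (h \<circ> \<kappa>) (h (\<kappa> A)) = C \<kappa> (\<kappa> A)" if "A \<in> P" for A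
  proof -
    have "{B \<in> P. (h \<circ> \<kappa>) B = h (\<kappa> A)} = {B \<in> P. \<kappa> B = \<kappa> A}"
      using h that unfolding inj_on_def by auto
    then show ?thesis unfolding C_def by simp
  qed
  have "Qof (h \<circ> \<kappa>) = (\<lambda>A. C (h \<circ> \<kappa>) (h (\<kappa> A))) ` P" unfolding Qof_def by (simp add: image_image)
  also have "\<dots> = (\<lambda>A. C \<kappa> (\<kappa> A)) ` P" using e by (intro image_cong) auto
  also have "\<dots> = Qof \<kappa>" unfolding Qof_def by (simp add: image_image)
  finally show ?thesis .
qed

lemma Qof_merge:
  assumes z1: "z1 \<in> \<kappa> ` P" and z2: "z2 \<in> \<kappa> ` P" and nz: "z1 \<noteq> z2" and hz: "h z1 = h z2"
  and hx: "\<And>x y. x \<in> \<kappa> ` P \<Longrightarrow> y \<in> \<kappa> ` P \<Longrightarrow> h x = h y \<Longrightarrow> x = y \<or> {x, y} = {z1, z2}"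
  shows "merge_step (Qof \<kappa>) (Qof (h \<circ> \<kappa>))"
proof -
  let ?U = "C \<kappa> z1" and ?W = "C \<kappa> z2"
  have UQ: "?U \<in> Qof \<kappa>" "?W \<in> Qof \<kappa>" unfolding Qof_def using z1 z2 by auto
  have UW: "?U \<noteq> ?W" using C_inj[of \<kappa>] z1 z2 nz unfolding inj_on_def by blast
  have e1: "C (h \<circ> \<kappa>) (h (\<kappa> A)) = ?U \<union> ?W" if "A \<in> P" "\<kappa> A \<in> {z1, z2}" for A
  proof -
    have "{B \<in> P. (h \<circ> \<kappa>) B = h (\<kappa> A)} = {B \<in> P. \<kappa> B = z1} \<union> {B \<in> P. \<kappa> B = z2}"
    proof (intro set_eqI iffI)
      fix B assume B: "B \<in> {B \<in> P. (h \<circ> \<kappa>) B = h (\<kappa> A)}"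
      then have "h (\<kappa> B) = h z1" using that hz by auto
      then have "\<kappa> B = z1 \<or> {\<kappa> B, z1} = {z1, z2}" using hx[of "\<kappa> B" z1] B z1 by auto
      then show "B \<in> {B \<in> P. \<kappa> B = z1} \<union> {B \<in> P. \<kappa> B = z2}" using B by (auto simp: doubleton_eq_iff)
    next
      fix B assume "B \<in> {B \<in> P. \<kappa> B = z1} \<union> {B \<in> P. \<kappa> B = z2}"
      then show "B \<in> {B \<in> P. (h \<circ> \<kappa>) B = h (\<kappa> A)}" using that hz by auto
    qed
    then show ?thesis unfolding C_def by auto
  qed
  have e2: "C (h \<circ> \<kappa>) (h (\<kappa> A)) = C \<kappa> (\<kappa> A)" if "A \<in> P" "\<kappa> A \<notin> {z1, z2}" for A
  proof -
    have "{B \<in> P. (h \<circ> \<kappa>) B = h (\<kappa> A)} = {B \<in> P. \<kappa> B = \<kappa> A}"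
    proof (intro set_eqI iffI)
      fix B assume B: "B \<in> {B \<in> P. (h \<circ> \<kappa>) B = h (\<kappa> A)}"
      then have "\<kappa> B = \<kappa> A \<or> {\<kappa> B, \<kappa> A} = {z1, z2}" using hx[of "\<kappa> B" "\<kappa> A"] that by auto
      then show "B \<in> {B \<in> P. \<kappa> B = \<kappa> A}" using B that by (auto simp: doubleton_eq_iff)
    qed auto
    then show ?thesis unfolding C_def by simp
  qed
  have "Qof (h \<circ> \<kappa>) = insert (?U \<union> ?W) (Qof \<kappa> - {?U, ?W})"
  proof (intro set_eqI iffI)
    fix X assume "X \<in> Qof (h \<circ> \<kappa>)"
    then obtain A where A: "A \<in> P" "X = C (h \<circ> \<kappa>) (h (\<kappa> A))" unfolding Qof_def by auto
    show "X \<in> insert (?U \<union> ?W) (Qof \<kappa> - {?U, ?W})"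
    proof (cases "\<kappa> A \<in> {z1, z2}")
      case True then show ?thesis using e1 A by simp
    next
      case False
      then have X: "X = C \<kappa> (\<kappa> A)" using e2 A by simp
      have "X \<noteq> ?U" "X \<noteq> ?W" using C_inj[of \<kappa>] z1 z2 A(1) False X unfolding inj_on_def by auto
      moreover have "X \<in> Qof \<kappa>" unfolding X Qof_def using A(1) by auto
      ultimately show ?thesis by simp
    qed
  next
    fix X assume X: "X \<in> insert (?U \<union> ?W) (Qof \<kappa> - {?U, ?W})"
    show "X \<in> Qof (h \<circ> \<kappa>)"
    proof (cases "X = ?U \<union> ?W")
      case True
      obtain A where A: "A \<in> P" "\<kappa> A = z1" using z1 by auto
      then have "X = C (h \<circ> \<kappa>) ((h \<circ> \<kappa>) A)" using e1[OF A(1)] True by simp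
      then show ?thesis unfolding Qof_def using A(1) by blast
    next
      case False
      then have "X \<in> Qof \<kappa>" "X \<noteq> ?U" "X \<noteq> ?W" using X by auto
      then obtain A where A: "A \<in> P" "X = C \<kappa> (\<kappa> A)" unfolding Qof_def by auto
      then have "\<kappa> A \<notin> {z1, z2}" using \<open>X \<noteq> ?U\<close> \<open>X \<noteq> ?W\<close> by auto
      then have "X = C (h \<circ> \<kappa>) ((h \<circ> \<kappa>) A)" using e2[OF A(1)] A(2) by simp
      then show ?thesis unfolding Qof_def using A(1) by blast
    qed
  qed
  then show ?thesis unfolding merge_step_def using UQ UW by blast
qed


definition hh :: "nat \<Rightarrow> 'a set \<times> nat \<Rightarrow> 'a set \<times> nat \<times> nat \<Rightarrow> 'a set \<times> nat \<times> nat" where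
  "hh k a v = (if fst (snd v) = k \<and> (fst v, snd (snd v) div 2) = a then (fst v, Suc k, snd (snd v) div 2) else v)"

lemma key_ins: "a \<notin> M \<Longrightarrow> key k (insert a M) A = hh k a (key k M A)"
  unfolding key_def psi_def hh_def by auto

lemma key_img: "v \<in> key k M ` P \<Longrightarrow>
   (fst (snd v) = k \<and> (fst v, snd (snd v) div 2) \<notin> M) \<or> (fst (snd v) = Suc k \<and> (fst v, snd (snd v)) \<in> M)"
  unfolding key_def psi_def by auto

lemma two_cases: "(x::nat) div 2 = t \<Longrightarrow> x = 2*t \<or> x = 2*t+1" by presburger

lemma hh_prop:
  assumes aM: "a \<notin> M" and x: "x \<in> key k M ` P" and y: "y \<in> key k M ` P" and h: "hh k a x = hh k a y"
  shows "x = y \<or> {x, y} = {(fst a, k, 2*snd a), (fst a, k, 2*snd a+1)}"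
proof -
  obtain x1 x2 x3 where xe: "x = (x1, x2, x3)" by (cases x) auto
  obtain y1 y2 y3 where ye: "y = (y1, y2, y3)" by (cases y) auto
  obtain a1 a2 where ae: "a = (a1, a2)" by (cases a) auto
  have kx: "(x2 = k \<and> (x1, x3 div 2) \<notin> M) \<or> (x2 = Suc k \<and> (x1, x3) \<in> M)" using key_img[OF x] xe by simp
  have ky: "(y2 = k \<and> (y1, y3 div 2) \<notin> M) \<or> (y2 = Suc k \<and> (y1, y3) \<in> M)" using key_img[OF y] ye by simp
  show ?thesis
  proof (cases "x2 = k \<and> (x1, x3 div 2) = a")
    case ax: True
    show ?thesis
    proof (cases "y2 = k \<and> (y1, y3 div 2) = a")
      case ay: True
      have "x3 = 2*a2 \<or> x3 = 2*a2+1" using ax ae two_cases by auto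
      moreover have "y3 = 2*a2 \<or> y3 = 2*a2+1" using ay ae two_cases by auto
      ultimately show ?thesis using ax ay ae xe ye by auto
    next
      case ay: False
      have "y = (x1, Suc k, x3 div 2)" using h ax ay xe ye unfolding hh_def by auto
      then show ?thesis using ky ye ax aM by auto
    qed
  next
    case ax: False
    show ?thesis
    proof (cases "y2 = k \<and> (y1, y3 div 2) = a")
      case ay: True
      have "x = (y1, Suc k, y3 div 2)" using h ax ay xe ye unfolding hh_def by auto
      then show ?thesis using kx xe ay aM by auto
    next
      case ay: False
      have "x = y" using h ax ay xe ye unfolding hh_def by auto
      then show ?thesis by simp
    qed
  qed
qed

lemma mrd_key: "max_red_degree (quot_trigraph G (Qof (key k M))) \<le> 4 * D"
proof (rule mrd_le[OF finQ])
  fix X assume "X \<in> Qof (key k M)"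
  then obtain z where "z \<in> key k M ` P" "X = C (key k M) z" unfolding Qof_def by auto
  then show "card (nbrs G (Qof (key k M)) X) \<le> 4 * D" using key_bound[of z k M] by simp
qed

lemma phase_step:
  assumes aM: "a \<notin> M" and r: "(stp G (4*D))\<^sup>*\<^sup>* Q0 (Qof (key k M))"
  shows "(stp G (4*D))\<^sup>*\<^sup>* Q0 (Qof (key k (insert a M)))"
proof -
  define z1 where "z1 = (fst a, k, 2*snd a)"
  define z2 where "z2 = (fst a, k, 2*snd a+1)"
  have eq: "Qof (key k (insert a M)) = Qof (hh k a \<circ> key k M)"
    by (rule Qof_cong) (simp add: key_ins[OF aM])
  show ?thesis
  proof (cases "z1 \<in> key k M ` P \<and> z2 \<in> key k M ` P")
    case True
    have "merge_step (Qof (key k M)) (Qof (hh k a \<circ> key k M))"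
    proof (rule Qof_merge)
      show "z1 \<in> key k M ` P" "z2 \<in> key k M ` P" using True by auto
      show "z1 \<noteq> z2" unfolding z1_def z2_def by simp
      show "hh k a z1 = hh k a z2" unfolding z1_def z2_def hh_def by auto
      show "x = y \<or> {x, y} = {z1, z2}" if "x \<in> key k M ` P" "y \<in> key k M ` P" "hh k a x = hh k a y" for x y
        using hh_prop[OF aM that] unfolding z1_def z2_def .
    qed
    then have "stp G (4*D) (Qof (key k M)) (Qof (key k (insert a M)))"
      unfolding stp_def eq using mrd_key[of k "insert a M"] eq by simp
    then show ?thesis using r by (rule rtranclp.rtrancl_into_rtrancl[rotated])
  next
    case False
    have "inj_on (hh k a) (key k M ` P)"
    proof (rule inj_onI)
      fix x y assume xy: "x \<in> key k M ` P" "y \<in> key k M ` P" "hh k a x = hh k a y"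
      have "x = y \<or> {x, y} = {z1, z2}" using hh_prop[OF aM xy] unfolding z1_def z2_def .
      then show "x = y" using False xy by (auto simp: doubleton_eq_iff)
    qed
    then have "Qof (key k (insert a M)) = Qof (key k M)" unfolding eq by (rule Qof_inj)
    then show ?thesis using r by simp
  qed
qed

lemma phase: "(stp G (4*D))\<^sup>*\<^sup>* (Qof (key k {})) (Qof (key (Suc k) {}))"
proof -
  define T where "T = (\<lambda>A. (rep A, idx A div 2^k div 2)) ` P"
  have finT: "finite T" unfolding T_def using finP by simp
  have "(stp G (4*D))\<^sup>*\<^sup>* (Qof (key k {})) (Qof (key k T))"
    using finT subset_refl
  proof (induction T rule: finite_subset_induct)
    case empty then show ?case by simp
  next
    case (insert a F) then show ?case using phase_step by blast
  qed
  moreover have "Qof (key k T) = Qof (key (Suc k) {})"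
  proof (rule Qof_cong)
    fix A assume A: "A \<in> P"
    have p: "(2::nat)^Suc k = 2^k * 2" by simp
    have "idx A div 2^k div 2 = idx A div 2^(Suc k)" unfolding p by (rule div_mult2_eq[symmetric])
    then show "key k T A = key (Suc k) {} A" unfolding key_def psi_def T_def using A by auto
  qed
  ultimately show ?thesis by simp
qed

lemma Qof_key0: "Qof (key 0 {}) = P"
proof -
  have k0: "key 0 {} A = (rep A, 0, idx A)" for A unfolding key_def psi_def by simp
  have "C (key 0 {}) (key 0 {} A) = A" if "A \<in> P" for A
  proof -
    have "{B \<in> P. key 0 {} B = key 0 {} A} = {A}"
      using rep_idx_inj that unfolding k0 by auto
    then show ?thesis unfolding C_def by simp
  qed
  then have "Qof (key 0 {}) = (\<lambda>A. A) ` P" unfolding Qof_def image_image by (intro image_cong) auto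
  then show ?thesis by simp
qed

lemma phases: "(stp G (4*D))\<^sup>*\<^sup>* P (Qof (key k {}))"
proof (induction k)
  case 0 then show ?case using Qof_key0 by simp
next
  case (Suc k) then show ?case using phase[of k] by (rule rtranclp_trans)
qed

theorem core_main:
  assumes A0: "A0 \<in> P" "s A0 \<noteq> A0"
  shows "\<exists>P'. (stp G (4*D))\<^sup>*\<^sup>* P P' \<and> card P' < card P \<and> (\<forall>X\<in>P'. card (nbrs G P' X) \<le> D)
     \<and> finite P' \<and> (\<forall>X\<in>P'. X \<noteq> {}) \<and> (\<forall>X\<in>P'. \<forall>Y\<in>P'. X \<noteq> Y \<longrightarrow> X \<inter> Y = {}) \<and> \<Union>P' = \<Union>P"
proof -
  define K where "K = card P"
  have K: "card P \<le> 2^K" unfolding K_def by (simp add: less_imp_le)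
  let ?Q = "Qof (key K {})"
  have "\<not> inj_on (key K {}) P"
  proof
    assume i: "inj_on (key K {}) P"
    have sA: "s A0 \<in> P" using fp_in[OF A0(1), of 1] by simp
    have "rep (s A0) = rep A0" using rep_shift[OF A0(1), of 1] by simp
    then have "key K {} (s A0) = key K {} A0" using key_final[OF K] sA A0(1) by simp
    then show False using i sA A0 unfolding inj_on_def by blast
  qed
  then have "card (key K {} ` P) < card P"
    using card_image_le[OF finP, of "key K {}"] inj_on_iff_eq_card[OF finP] by fastforce
  moreover have "card ?Q \<le> card (key K {} ` P)" unfolding Qof_def by (rule card_image_le) (use finP in simp)
  ultimately have "card ?Q < card P" by simp
  moreover have "\<forall>X\<in>?Q. card (nbrs G ?Q X) \<le> D"
  proof
    fix X assume "X \<in> ?Q"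
    then obtain z where "z \<in> key K {} ` P" "X = C (key K {}) z" unfolding Qof_def by auto
    then show "card (nbrs G ?Q X) \<le> D" using final_bound[OF K] by simp
  qed
  ultimately show ?thesis using phases[of K] finQ Qof_part by blast
qed

end



definition part_ok :: "'a trigraph \<Rightarrow> 'a set set \<Rightarrow> bool" where
  "part_ok G P \<longleftrightarrow> finite P \<and> (\<forall>X\<in>P. X \<noteq> {}) \<and> (\<forall>X\<in>P. \<forall>Y\<in>P. X \<noteq> Y \<longrightarrow> X \<inter> Y = {})
     \<and> \<Union>P = verts G"

definition good_st :: "'a trigraph \<Rightarrow> 'a set set \<Rightarrow> bool" where
  "good_st G P \<longleftrightarrow> part_ok G P \<and> (stp G (4 * max_degree G))\<^sup>*\<^sup>* (singletons (verts G)) P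
     \<and> max_degree (quot_trigraph G P) \<le> max_degree G"

lemma inv_step:
  assumes I: "good_st G P" and na: "\<not> asymmetric (quot_trigraph G P)"
  shows "\<exists>P'. good_st G P' \<and> card P' < card P"
proof -
  let ?D = "max_degree G"
  have po: "part_ok G P" using I unfolding good_st_def by simp
  have finP: "finite P" using po unfolding part_ok_def by simp
  have "\<exists>f. bij_betw f P P
    \<and> (\<forall>u\<in>P. \<forall>v\<in>P. {u, v} \<in> edges (quot_trigraph G P) \<longleftrightarrow> {f u, f v} \<in> edges (quot_trigraph G P))
    \<and> (\<exists>v\<in>P. f v \<noteq> v)"
    using na unfolding asymmetric_def verts_quot by blast
  then obtain f v where f: "bij_betw f P P"
    "\<forall>u\<in>P. \<forall>v\<in>P. {u, v} \<in> edges (quot_trigraph G P) \<longleftrightarrow> {f u, f v} \<in> edges (quot_trigraph G P)"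
    and v: "v \<in> P" "f v \<noteq> v" by blast
  have fin: "\<And>U. U \<in> P \<Longrightarrow> f U \<in> P" using f(1) bij_betw_apply by metis
  interpret core f P G ?D
  proof
    show "finite P" by (rule finP)
    show "bij_betw f P P" by (rule f(1))
    show "\<And>A. A \<in> P \<Longrightarrow> A \<noteq> {}" using po unfolding part_ok_def by auto
    show "\<And>A B. A \<in> P \<Longrightarrow> B \<in> P \<Longrightarrow> A \<noteq> B \<Longrightarrow> A \<inter> B = {}" using po unfolding part_ok_def by auto
    show "W \<in> nbrs G P U \<longleftrightarrow> f W \<in> nbrs G P (f U)" if UW: "U \<in> P" "W \<in> P" for U W
    proof -
      have "W \<in> nbrs G P U \<longleftrightarrow> {U, W} \<in> edges (quot_trigraph G P)" by (rule edges_quot_iff[OF UW, symmetric])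
      also have "\<dots> \<longleftrightarrow> {f U, f W} \<in> edges (quot_trigraph G P)" using f(2) UW by blast
      also have "\<dots> \<longleftrightarrow> f W \<in> nbrs G P (f U)" by (rule edges_quot_iff[OF fin[OF UW(1)] fin[OF UW(2)]])
      finally show ?thesis .
    qed
    show "card (nbrs G P U) \<le> ?D" if "U \<in> P" for U
      using md_ge[OF finP that, of G] I unfolding good_st_def by linarith
  qed
  from core_main[OF v] obtain P' where P'c: "(stp G (4 * ?D))\<^sup>*\<^sup>* P P' \<and> card P' < card P
     \<and> (\<forall>X\<in>P'. card (nbrs G P' X) \<le> ?D)
     \<and> finite P' \<and> (\<forall>X\<in>P'. X \<noteq> {}) \<and> (\<forall>X\<in>P'. \<forall>Y\<in>P'. X \<noteq> Y \<longrightarrow> X \<inter> Y = {}) \<and> \<Union>P' = \<Union>P" ..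
  have P': "(stp G (4 * ?D))\<^sup>*\<^sup>* P P'" "card P' < card P" "\<forall>X\<in>P'. card (nbrs G P' X) \<le> ?D"
    "finite P'" "\<forall>X\<in>P'. X \<noteq> {}" "\<forall>X\<in>P'. \<forall>Y\<in>P'. X \<noteq> Y \<longrightarrow> X \<inter> Y = {}" "\<Union>P' = \<Union>P"
    using P'c by auto
  have "part_ok G P'" using P' po unfolding part_ok_def by auto
  moreover have "(stp G (4 * ?D))\<^sup>*\<^sup>* (singletons (verts G)) P'"
    using I P'(1) unfolding good_st_def by auto
  moreover have "max_degree (quot_trigraph G P') \<le> ?D" using md_le[OF P'(4)] P'(3) by auto
  ultimately show ?thesis using P'(2) unfolding good_st_def by blast
qed

lemma inv_init:
  assumes "is_trigraph G" shows "good_st G (singletons (verts G))"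
proof -
  have finV: "finite (verts G)" using assms unfolding is_trigraph_def by simp
  have "part_ok G (singletons (verts G))" unfolding part_ok_def singletons_def using finV by auto
  then show ?thesis unfolding good_st_def using singletons_md[OF assms] by simp
qed

lemma exists_asym:
  assumes "good_st G P" shows "\<exists>P'. good_st G P' \<and> asymmetric (quot_trigraph G P')"
  using assms
proof (induction "card P" arbitrary: P rule: less_induct)
  case less
  show ?case
  proof (cases "asymmetric (quot_trigraph G P)")
    case True then show ?thesis using less.prems by blast
  next
    case False
    then obtain P' where "good_st G P'" "card P' < card P" using inv_step[OF less.prems] by blast
    then show ?thesis using less.hyps by blast
  qed
qed

lemma rt_list:
  assumes "r\<^sup>*\<^sup>* x y"
  shows "\<exists>ps. ps \<noteq> [] \<and> hd ps = x \<and> last ps = y \<and> (\<forall>k. Suc k < length ps \<longrightarrow> r (ps ! k) (ps ! Suc k))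
           \<and> (\<forall>Q\<in>set ps. Q = x \<or> (\<exists>Q'. r Q' Q))"
  using assms
proof (induction rule: converse_rtranclp_induct)
  case base
  show ?case by (intro exI[of _ "[y]"]) simp
next
  case (step x z)
  then obtain ps where ps: "ps \<noteq> []" "hd ps = z" "last ps = y"
    "\<forall>k. Suc k < length ps \<longrightarrow> r (ps ! k) (ps ! Suc k)" "\<forall>Q\<in>set ps. Q = z \<or> (\<exists>Q'. r Q' Q)" by blast
  have s1: "\<forall>k. Suc k < length (x # ps) \<longrightarrow> r ((x # ps) ! k) ((x # ps) ! Suc k)"
  proof (intro allI impI)
    fix k assume k: "Suc k < length (x # ps)"
    show "r ((x # ps) ! k) ((x # ps) ! Suc k)"
    proof (cases k)
      case 0
      have "ps ! 0 = z" using ps(1,2) by (simp add: hd_conv_nth)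
      then show ?thesis using 0 step.hyps(1) by simp
    next
      case (Suc k')
      then show ?thesis using ps(4) k by simp
    qed
  qed
  have s2: "\<forall>Q\<in>set (x # ps). Q = x \<or> (\<exists>Q'. r Q' Q)" using ps(5) step.hyps(1) by auto
  show ?case using ps s1 s2 by (intro exI[of _ "x # ps"]) simp
qed

theorem mainTheorem15:
  fixes G :: "'a trigraph"
  assumes "is_trigraph G"
  shows "\<exists>ps. partial_contraction_sequence G ps
           \<and> seq_width G ps \<le> 4 * max_degree G
           \<and> asymmetric (quot_trigraph G (last ps))
           \<and> max_degree (quot_trigraph G (last ps)) \<le> max_degree G"
proof -
  let ?D = "max_degree G"
  let ?S = "singletons (verts G)"
  obtain P where P: "good_st G P" "asymmetric (quot_trigraph G P)"
    using exists_asym[OF inv_init[OF assms]] by blast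
  have rt: "(stp G (4 * ?D))\<^sup>*\<^sup>* ?S P" using P(1) unfolding good_st_def by simp
  obtain ps where ps: "ps \<noteq> []" "hd ps = ?S" "last ps = P"
    "\<forall>k. Suc k < length ps \<longrightarrow> stp G (4 * ?D) (ps ! k) (ps ! Suc k)"
    "\<forall>Q\<in>set ps. Q = ?S \<or> (\<exists>Q'. stp G (4 * ?D) Q' Q)"
    using rt_list[OF rt] by blast
  have pcs: "partial_contraction_sequence G ps"
    unfolding partial_contraction_sequence_def using ps(1,2,4) unfolding stp_def by auto
  have finS: "finite ?S" using assms unfolding is_trigraph_def singletons_def by simp
  have "\<forall>Q\<in>set ps. max_red_degree (quot_trigraph G Q) \<le> 4 * ?D"
  proof
    fix Q assume "Q \<in> set ps"
    then consider "Q = ?S" | "\<exists>Q'. stp G (4 * ?D) Q' Q" using ps(5) by blast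
    then show "max_red_degree (quot_trigraph G Q) \<le> 4 * ?D"
    proof cases
      case 1
      have "max_red_degree (quot_trigraph G Q) \<le> max_degree (quot_trigraph G Q)"
        unfolding 1 by (rule mrd_le_md[OF finS])
      also have "\<dots> \<le> ?D" unfolding 1 by (rule singletons_md[OF assms])
      finally show ?thesis by simp
    next
      case 2 then show ?thesis unfolding stp_def by blast
    qed
  qed
  then have "seq_width G ps \<le> 4 * ?D" unfolding seq_width_def by simp
  moreover have "max_degree (quot_trigraph G (last ps)) \<le> ?D" using P(1) ps(3) unfolding good_st_def by simp
  ultimately show ?thesis using pcs P(2) ps(3) by blast
qed


end
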